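(* For every $n\ge1$: (i) $\displaystyle\sum_{[\pi]\in\mathfrak{C}_{2n}^o}x^{\operatorname{drop}_{oo}([\pi])}y^{\operatorname{drop}_{eo}([\pi])}=\sum_{[\pi']\in\mathfrak{C}_{2n-1}^o}x^{\operatorname{drop}_{oo}([\pi'])}y^{\operatorname{drop}_{eo}([\pi'])}\Big[\operatorname{drop}_{oo}([\pi'])x^{-1}y+\operatorname{drop}_{eo}([\pi'])+\big(n-\operatorname{drop}_{oo}([\pi'])-\operatorname{drop}_{eo}([\pi'])\big)y\Big];$ (ii) $\displaystyle\sum_{[\pi]\in\mathfrak{C}_{2n+1}^o}x^{\operatorname{drop}_{oo}([\pi])}y^{\operatorname{drop}_{eo}([\pi])}=\sum_{[\pi']\in\mathfrak{C}_{2n}^o}x^{\operatorname{drop}_{oo}([\pi'])}y^{\operatorname{drop}_{eo}([\pi'])}\Big[\operatorname{drop}_{oo}([\pi'])+\operatorname{drop}_{eo}([\pi'])xy^{-1}+\big(n-\operatorname{drop}_{oo}([\pi'])-\operatorname{drop}_{eo}([\pi'])\big)x\Big].$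
   Context: $x,y$ are formal variables. For $n\ge1$, a cycle on $[n]=\{1,\dots,n\}$ is an equivalence class $[\pi]$ of permutations $\pi=\pi_1\cdots\pi_n$ of $[n]$ (in one-line notation) under cyclic rotation of the entries; the set of cycles on $[n]$ is $\mathfrak{C}_n$. Each cycle is represented by the permutation $\pi$ with $\pi_1=1$, and indices are read modulo $n$. A drop of $[\pi]$ is a consecutive pair $(\pi_i,\pi_{i+1})$, $1\le i\le n$, with $\pi_i>\pi_{i+1}$. By convention, the unique cycle $[(1)]\in\mathfrak{C}_1$ has exactly one drop $(\star,1)$, where $\star$ is considered neither even nor odd. A drop $(a,b)$ is odd-odd if $a,b$ are both odd, and even-odd if $a$ is even and $b$ is odd; $\operatorname{drop}_{oo}([\pi])$ and $\operatorname{drop}_{eo}([\pi])$ are the numbers of odd-odd and even-odd drops of $[\pi]$. $\mathfrak{C}_n^o$ is the set of cycles $[\pi]\in\mathfrak{C}_n$ such that for every drop $(\pi_i,\pi_{i+1})$, the entry $\pi_{i+1}$ is odd. *)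

theory Defs
  imports Main
begin

text \<open>A cycle on [n] is represented by its unique representative permutation
(one-line notation, as a list) whose first entry is 1.\<close>
definition cycles :: "nat \<Rightarrow> nat list set" where
  "cycles n = {p. distinct p \<and> set p = {1..n} \<and> p \<noteq> [] \<and> hd p = 1}"

text \<open>For n = 1 the list [1] has no such pair; the conventional drop (star,1) is neither odd-odd
nor even-odd and has odd second entry, so it affects none of the notions below.\<close>
definition drops :: "nat list \<Rightarrow> (nat \<times> nat) list" where
  "drops p = filter (\<lambda>(a,b). a > b)
     (map (\<lambda>i. (p ! i, p ! ((i + 1) mod length p))) [0..<length p])"

definition drop_oo :: "nat list \<Rightarrow> nat" where
  "drop_oo p = length (filter (\<lambda>(a,b). odd a \<and> odd b) (drops p))"

definition drop_eo :: "nat list \<Rightarrow> nat" where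
  "drop_eo p = length (filter (\<lambda>(a,b). even a \<and> odd b) (drops p))"

definition cycles_o :: "nat \<Rightarrow> nat list set" where
  "cycles_o n = {p \<in> cycles n. \<forall>(a,b) \<in> set (drops p). odd b}"

end

theory Submission
  imports Defs
begin

definition cp :: "nat list \<Rightarrow> (nat \<times> nat) list" where
  "cp p = map (\<lambda>i. (p ! i, p ! ((i + 1) mod length p))) [0..<length p]"

definition pr :: "nat list \<Rightarrow> nat \<Rightarrow> nat \<times> nat" where
  "pr p k = (last (take k p), hd (drop k p @ [hd p]))"

definition Poo :: "nat \<times> nat \<Rightarrow> bool" where
  "Poo = (\<lambda>(a,b). b < a \<and> odd a \<and> odd b)"

definition Peo :: "nat \<times> nat \<Rightarrow> bool" where
  "Peo = (\<lambda>(a,b). b < a \<and> even a \<and> odd b)"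

lemma drops_cp: "drops p = filter (\<lambda>(a,b). b < a) (cp p)"
  by (simp add: drops_def cp_def)

lemma drop_oo_cp: "drop_oo p = length (filter Poo (cp p))"
  by (simp add: drop_oo_def drops_cp filter_filter Poo_def case_prod_unfold conj_ac)

lemma drop_eo_cp: "drop_eo p = length (filter Peo (cp p))"
  by (simp add: drop_eo_def drops_cp filter_filter Peo_def case_prod_unfold conj_ac)

lemma cp_zip: "p \<noteq> [] \<Longrightarrow> cp p = zip p (tl p @ [hd p])"
proof (rule nth_equalityI)
  assume p: "p \<noteq> []"
  show "length (cp p) = length (zip p (tl p @ [hd p]))" using p by (simp add: cp_def)
  fix i assume "i < length (cp p)"
  then have i: "i < length p" by (simp add: cp_def)
  show "cp p ! i = zip p (tl p @ [hd p]) ! i"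
  proof (cases "Suc i < length p")
    case True
    then have "i < length p - 1" by simp
    then show ?thesis using i p by (simp add: cp_def nth_append nth_tl)
  next
    case False
    then have "Suc i = length p" using i by simp
    then have "\<not> i < length p - 1" by simp
    then show ?thesis using i p \<open>Suc i = length p\<close> by (simp add: cp_def nth_append hd_conv_nth)
  qed
qed

lemma cp_pr: "cp p = map (pr p) [1..<length p + 1]"
proof (rule nth_equalityI)
  show "length (cp p) = length (map (pr p) [1..<length p + 1])" by (simp add: cp_def del: upt_Suc)
  fix i assume "i < length (cp p)"
  then have i: "i < length p" by (simp add: cp_def)
  have l: "last (take (Suc i) p) = p ! i" using i by (simp add: take_Suc_conv_app_nth)
  show "cp p ! i = map (pr p) [1..<length p + 1] ! i"
  proof (cases "Suc i < length p")
    case True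
    then show ?thesis using i l by (simp add: cp_def pr_def hd_drop_conv_nth del: upt_Suc)
  next
    case False
    then have "Suc i = length p" using i by simp
    moreover have "p \<noteq> []" using i by auto
    ultimately show ?thesis using i l by (simp add: cp_def pr_def hd_conv_nth del: upt_Suc)
  qed
qed

lemma zip_split: "xs \<noteq> [] \<Longrightarrow> zip (xs @ ys) (tl (xs @ ys) @ [h]) =
   zip (butlast xs) (tl xs) @ (last xs, hd (ys @ [h])) # zip ys (tl (ys @ [h]))"
proof (induction xs)
  case Nil then show ?case by simp
next
  case (Cons a xs)
  show ?case
  proof (cases "xs = []")
    case True then show ?thesis by (cases ys) auto
  next
    case False
    then obtain c cs where "xs = c # cs" by (cases xs) auto
    then show ?thesis using Cons False by auto
  qed
qed

lemma cp_split: "xs \<noteq> [] \<Longrightarrow> cp (xs @ ys) =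
   zip (butlast xs) (tl xs) @ (last xs, hd (ys @ [hd xs])) # zip ys (tl (ys @ [hd xs]))"
  using cp_zip[of "xs@ys"] zip_split[of xs ys "hd xs"] by (metis append_is_Nil_conv hd_append2)

lemma cp_ins: "xs \<noteq> [] \<Longrightarrow> cp (xs @ m # ys) =
   zip (butlast xs) (tl xs) @ (last xs, m) # (m, hd (ys @ [hd xs])) # zip ys (tl (ys @ [hd xs]))"
  using cp_zip[of "xs@m#ys"] zip_split[of xs "m#ys" "hd xs"] by (cases ys) (auto simp: hd_append2)

lemma count_ins: "xs \<noteq> [] \<Longrightarrow>
  length (filter P (cp (xs @ m # ys))) + (if P (last xs, hd (ys @ [hd xs])) then 1 else 0)
  = length (filter P (cp (xs @ ys))) + (if P (last xs, m) then 1 else 0)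
    + (if P (m, hd (ys @ [hd xs])) then 1 else 0)"
  using cp_ins[of xs m ys] cp_split[of xs ys] by (cases ys) auto

lemma pr_split: "xs \<noteq> [] \<Longrightarrow> pr (xs @ ys) (length xs) = (last xs, hd (ys @ [hd xs]))"
  by (simp add: pr_def)

definition Kset :: "nat list \<Rightarrow> nat set" where
  "Kset p = {k \<in> {1..length p}. odd (snd (pr p k))}"

definition ins :: "nat list \<Rightarrow> nat \<Rightarrow> nat \<Rightarrow> nat list" where
  "ins p k m = take k p @ m # drop k p"

lemma cycles_len: "p \<in> cycles L \<Longrightarrow> length p = L"
  unfolding cycles_def using distinct_card by fastforce

lemma finite_cycles_o: "finite (cycles_o L)"
proof -
  have "cycles_o L \<subseteq> {xs. set xs \<subseteq> {1..L} \<and> length xs = L}"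
    using cycles_len unfolding cycles_o_def cycles_def by auto
  moreover have "finite {xs. set xs \<subseteq> {1..L} \<and> length xs = L}"
    by (rule finite_lists_length_eq) simp
  ultimately show ?thesis by (rule finite_subset)
qed

lemma pr_mem:
  assumes "p \<noteq> []" "k \<in> {1..length p}"
  shows "fst (pr p k) \<in> set p" "snd (pr p k) \<in> set p"
proof -
  have "take k p \<noteq> []" using assms by auto
  then have "last (take k p) \<in> set (take k p)" by (rule last_in_set)
  then show "fst (pr p k) \<in> set p" by (auto simp: pr_def dest: in_set_takeD)
  have "hd (drop k p @ [hd p]) \<in> set (drop k p @ [hd p])" by (rule hd_in_set) simp
  then show "snd (pr p k) \<in> set p" using assms(1) by (auto simp: pr_def dest: in_set_dropD)
qed

lemma ins_count:
  assumes "p \<noteq> []" "k \<in> {1..length p}"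
  shows "length (filter P (cp (ins p k m))) + (if P (pr p k) then 1 else 0)
    = length (filter P (cp p)) + (if P (fst (pr p k), m) then 1 else 0)
    + (if P (m, snd (pr p k)) then 1 else 0)"
proof -
  have ne: "take k p \<noteq> []" and hd: "hd (take k p) = hd p" using assms by auto
  have "pr p k = (last (take k p), hd (drop k p @ [hd (take k p)]))"
    using hd by (simp add: pr_def)
  then show ?thesis using count_ins[OF ne, of P m "drop k p"] by (simp add: ins_def)
qed

lemma drops_mem_cp: "(a,b) \<in> set (drops p) \<longleftrightarrow> (a,b) \<in> set (cp p) \<and> b < a"
  by (auto simp: drops_cp)

lemma ins_in:
  assumes p: "p \<in> cycles_o (m-1)" and m: "m \<ge> 2" and k: "k \<in> Kset p"
  shows "ins p k m \<in> cycles_o m"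
proof -
  have len: "length p = m - 1" using p cycles_len unfolding cycles_o_def by auto
  have pne: "p \<noteq> []" and dp: "distinct p" and sp: "set p = {1..m-1}" and hp: "hd p = 1"
    using p m unfolding cycles_o_def cycles_def by auto
  have kk: "k \<in> {1..length p}" and ob: "odd (snd (pr p k))" using k by (auto simp: Kset_def)
  have ne: "take k p \<noteq> []" and hd: "hd (take k p) = hd p" using pne kk by auto
  have mnot: "m \<notin> set p" using sp m by auto
  have "set (ins p k m) = insert m (set (take k p @ drop k p))"
    unfolding ins_def by (simp only: set_append set_simps) blast
  then have "set (ins p k m) = insert m (set p)" by simp
  then have set: "set (ins p k m) = {1..m}" using sp m by auto
  have dist: "distinct (ins p k m)" unfolding ins_def using dp mnot
    set_take_disj_set_drop_if_distinct[OF dp, of k k]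
    by (auto dest: in_set_takeD in_set_dropD)
  have hdi: "hd (ins p k m) = 1" using ne hd hp by (simp add: ins_def)
  have pr: "pr p k = (last (take k p), hd (drop k p @ [hd (take k p)]))"
    using hd by (simp add: pr_def)
  have cpi: "set (cp (ins p k m)) = set (zip (butlast (take k p)) (tl (take k p))) \<union>
      {(fst (pr p k), m), (m, snd (pr p k))} \<union> set (zip (drop k p) (tl (drop k p @ [hd (take k p)])))"
    using cp_ins[OF ne, of m "drop k p"] pr by (auto simp: ins_def)
  have cpp: "set (cp p) = set (zip (butlast (take k p)) (tl (take k p))) \<union>
      {pr p k} \<union> set (zip (drop k p) (tl (drop k p @ [hd (take k p)])))"
    using cp_split[OF ne, of "drop k p"] pr by auto
  have fa: "fst (pr p k) < m" using pr_mem[OF pne kk] sp m by auto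
  have dr: "odd b" if ab: "(a,b) \<in> set (drops (ins p k m))" for a b
  proof -
    from ab have ab1: "(a,b) \<in> set (cp (ins p k m))" and lt: "b < a" by (auto simp: drops_mem_cp)
    show "odd b"
    proof (cases "(a,b) = (m, snd (pr p k))")
      case True then show ?thesis using ob by simp
    next
      case False
      then have "(a,b) \<in> set (cp p)" using ab1 cpi cpp fa lt by auto
      then have "(a,b) \<in> set (drops p)" using lt by (simp add: drops_mem_cp)
      then show ?thesis using p unfolding cycles_o_def by auto
    qed
  qed
  show ?thesis using set dist hdi dr unfolding cycles_o_def cycles_def by (auto simp: ins_def)
qed

lemma ins_surj:
  assumes q: "q \<in> cycles_o m" and m: "m \<ge> 2"
  shows "\<exists>p k. p \<in> cycles_o (m-1) \<and> k \<in> Kset p \<and> q = ins p k m"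
proof -
  have dq: "distinct q" and sq: "set q = {1..m}" and hq: "hd q = 1" and qne: "q \<noteq> []"
    using q unfolding cycles_o_def cycles_def by auto
  have "m \<in> set q" using sq m by auto
  then obtain xs ys where qs: "q = xs @ m # ys" by (meson split_list)
  have xne: "xs \<noteq> []" using hq qs m by (cases xs) auto
  define p where "p = xs @ ys"
  have hx: "hd xs = 1" using hq qs xne by simp
  have mn: "m \<notin> set xs" "m \<notin> set ys" using dq unfolding qs by simp_all
  have dp: "distinct p" using dq unfolding qs p_def by simp
  have "set p = set (xs @ m # ys) - {m}" using mn unfolding p_def by auto
  also have "\<dots> = {1..m} - {m}" using sq qs by simp
  also have "\<dots> = {1..m-1}" using m by auto
  finally have sp: "set p = {1..m-1}" .
  have hp: "hd p = 1" using hx xne by (simp add: p_def)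
  have pne: "p \<noteq> []" using xne by (simp add: p_def)
  define b where "b = hd (ys @ [hd xs])"
  have bmem: "b \<in> set p" unfolding b_def p_def using hd_in_set[of "ys @ [hd xs]"] xne
    by (cases ys) auto
  have bm: "b < m" using bmem sp by auto
  have cpq: "cp q = zip (butlast xs) (tl xs) @ (last xs, m) # (m, b) # zip ys (tl (ys @ [hd xs]))"
    using cp_ins[OF xne] qs b_def by simp
  have cpp: "cp p = zip (butlast xs) (tl xs) @ (last xs, b) # zip ys (tl (ys @ [hd xs]))"
    using cp_split[OF xne] b_def p_def by simp
  have "(m,b) \<in> set (drops q)" using cpq bm by (simp add: drops_mem_cp)
  then have ob: "odd b" using q unfolding cycles_o_def by auto
  have dr: "odd b'" if ab: "(a',b') \<in> set (drops p)" for a' b'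
  proof (cases "(a',b') = (last xs, b)")
    case True then show ?thesis using ob by simp
  next
    case False
    from ab have "(a',b') \<in> set (cp p)" "b' < a'" by (auto simp: drops_mem_cp)
    then have "(a',b') \<in> set (cp q)" using cpp cpq False by auto
    then have "(a',b') \<in> set (drops q)" using \<open>b' < a'\<close> by (simp add: drops_mem_cp)
    then show ?thesis using q unfolding cycles_o_def by auto
  qed
  have pc: "p \<in> cycles_o (m-1)" using dp sp hp pne dr unfolding cycles_o_def cycles_def by auto
  have tk: "take (length xs) p = xs" "drop (length xs) p = ys" by (simp_all add: p_def)
  have "pr p (length xs) = (last xs, b)" using pr_split[OF xne, of ys] b_def p_def by simp
  then have "length xs \<in> Kset p" using ob xne by (simp add: Kset_def p_def Suc_le_eq)
  moreover have "q = ins p (length xs) m" using qs tk by (simp add: ins_def)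
  ultimately show ?thesis using pc by blast
qed

lemma ins_inj:
  assumes "p \<in> cycles_o (m-1)" "p' \<in> cycles_o (m-1)" "m \<ge> 2" "k \<in> Kset p" "k' \<in> Kset p'"
    "ins p k m = ins p' k' m"
  shows "p = p' \<and> k = k'"
proof -
  have "m \<notin> set p" "m \<notin> set p'" using assms(1,2,3) unfolding cycles_o_def cycles_def by auto
  then have "take k p = take k' p' \<and> drop k p = drop k' p'"
    using assms(6) append_Cons_eq_iff[of m "take k p" "drop k p" "take k' p'" "drop k' p'"]
    by (auto simp: ins_def dest: in_set_takeD in_set_dropD)
  then have e: "p = p'" "take k p = take k' p" by (metis append_take_drop_id)+
  have "k \<le> length p" "k' \<le> length p" using assms(4,5) e by (auto simp: Kset_def)
  then have "k = k'" using e(2) by (metis length_take min.absorb2)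
  then show ?thesis using e by simp
qed

lemma ins_bij:
  assumes m: "m \<ge> 2"
  shows "bij_betw (\<lambda>(p,k). ins p k m) (SIGMA p:cycles_o (m-1). Kset p) (cycles_o m)"
  unfolding bij_betw_def
proof
  show "inj_on (\<lambda>(p,k). ins p k m) (SIGMA p:cycles_o (m-1). Kset p)"
    using ins_inj m by (auto simp: inj_on_def)
  show "(\<lambda>(p,k). ins p k m) ` (SIGMA p:cycles_o (m-1). Kset p) = cycles_o m"
    using ins_in ins_surj m by fastforce
qed

lemma sum_step:
  assumes m: "m \<ge> 2"
  shows "(\<Sum>q\<in>cycles_o m. f q) = (\<Sum>p\<in>cycles_o (m-1). \<Sum>k\<in>Kset p. f (ins p k m))"
proof -
  have fk: "finite (Kset p)" for p by (simp add: Kset_def)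
  have "(\<Sum>q\<in>cycles_o m. f q) = (\<Sum>z\<in>(SIGMA p:cycles_o (m-1). Kset p). f ((\<lambda>(p,k). ins p k m) z))"
    using sum.reindex_bij_betw[OF ins_bij[OF m], of f] by simp
  also have "\<dots> = (\<Sum>p\<in>cycles_o (m-1). \<Sum>k\<in>Kset p. f (ins p k m))"
    by (subst sum.Sigma[OF finite_cycles_o]) (auto simp: fk split_def)
  finally show ?thesis .
qed

lemma card_pr: "card {k \<in> {1..length p}. Q (pr p k)} = length (filter Q (cp p))"
proof -
  have "length (filter Q (cp p)) = length (filter (Q \<circ> pr p) [1..<length p + 1])"
    by (simp add: cp_pr filter_map del: upt_Suc)
  also have "\<dots> = card ({k. (Q \<circ> pr p) k} \<inter> set [1..<length p + 1])"
    by (rule distinct_length_filter) simp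
  also have "\<dots> = card {k \<in> {1..length p}. Q (pr p k)}"
    by (rule arg_cong[where f=card]) auto
  finally show ?thesis by simp
qed

lemma card_K:
  assumes "p \<in> cycles L"
  shows "card (Kset p) = card ({x. odd x} \<inter> {1..L})"
proof -
  have pne: "p \<noteq> []" and dp: "distinct p" and sp: "set p = {1..L}"
    using assms unfolding cycles_def by auto
  have "card (Kset p) = length (filter (\<lambda>z. odd (snd z)) (cp p))"
    unfolding Kset_def by (rule card_pr)
  also have "\<dots> = length (filter odd (map snd (cp p)))"
    by (simp add: filter_map comp_def)
  also have "map snd (cp p) = tl p @ [hd p]" using pne by (simp add: cp_zip)
  also have "length (filter odd (tl p @ [hd p])) = length (filter odd (hd p # tl p))"
    by simp
  also have "hd p # tl p = p" using pne by simp
  also have "length (filter odd p) = card ({x. odd x} \<inter> set p)"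
    by (rule distinct_length_filter[OF dp])
  finally show ?thesis using sp by simp
qed

lemma odd_img: "{x::nat. odd x} \<inter> {1..2*n} = (\<lambda>i. 2*i+1) ` {..<n}"
proof
  show "{x::nat. odd x} \<inter> {1..2*n} \<subseteq> (\<lambda>i. 2*i+1) ` {..<n}"
  proof
    fix x assume "x \<in> {x::nat. odd x} \<inter> {1..2*n}"
    then obtain i where "x = 2*i+1" "x \<le> 2*n" by (auto elim: oddE)
    then show "x \<in> (\<lambda>i. 2*i+1) ` {..<n}" by auto
  qed
qed auto

lemma odd_count1: "card ({x::nat. odd x} \<inter> {1..2*n}) = n"
  unfolding odd_img by (subst card_image) (auto simp: inj_on_def)

lemma odd_count2: "n \<ge> 1 \<Longrightarrow> card ({x::nat. odd x} \<inter> {1..2*n-1}) = n"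
proof -
  assume "n \<ge> 1"
  have "x \<le> 2*n-1" if "odd x" "x \<le> 2*n" for x :: nat
  proof -
    have "x \<noteq> 2*n" using that by auto
    then show ?thesis using that by arith
  qed
  then have "{x::nat. odd x} \<inter> {1..2*n-1} = {x::nat. odd x} \<inter> {1..2*n}"
    by auto
  then show ?thesis using odd_count1 by simp
qed

lemma sum_if3:
  fixes A B C :: "'a::field"
  assumes "finite K" "\<And>k. k \<in> K \<Longrightarrow> \<not> (P k \<and> Q k)"
  shows "(\<Sum>k\<in>K. if P k then A else if Q k then B else C) =
    A * of_nat (card {k\<in>K. P k}) + B * of_nat (card {k\<in>K. Q k})
    + C * (of_nat (card K) - of_nat (card {k\<in>K. P k}) - of_nat (card {k\<in>K. Q k}))"
proof -
  define K1 where "K1 = {k\<in>K. P k}"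
  define K2 where "K2 = {k\<in>K. Q k}"
  define K3 where "K3 = {k\<in>K. \<not> P k \<and> \<not> Q k}"
  have fin: "finite K1" "finite K2" "finite K3" using assms(1) by (auto simp: K1_def K2_def K3_def)
  have KU: "K = K1 \<union> (K2 \<union> K3)" using assms(2) by (auto simp: K1_def K2_def K3_def)
  have dj: "K1 \<inter> (K2 \<union> K3) = {}" "K2 \<inter> K3 = {}" using assms(2) by (auto simp: K1_def K2_def K3_def)
  have cK: "card K = card K1 + card K2 + card K3"
    unfolding KU using fin dj by (simp add: card_Un_disjoint)
  have "(\<Sum>k\<in>K. if P k then A else if Q k then B else C) =
     (\<Sum>k\<in>K1. if P k then A else if Q k then B else C) + ((\<Sum>k\<in>K2. if P k then A else if Q k then B else C)
      + (\<Sum>k\<in>K3. if P k then A else if Q k then B else C))"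
    unfolding KU using fin dj by (simp add: sum.union_disjoint)
  also have "\<dots> = (\<Sum>k\<in>K1. A) + ((\<Sum>k\<in>K2. B) + (\<Sum>k\<in>K3. C))"
  proof -
    have "(\<Sum>k\<in>K1. if P k then A else if Q k then B else C) = (\<Sum>k\<in>K1. A)"
      by (rule sum.cong) (auto simp: K1_def)
    moreover have "(\<Sum>k\<in>K2. if P k then A else if Q k then B else C) = (\<Sum>k\<in>K2. B)"
      by (rule sum.cong) (auto simp: K2_def dest: assms(2))
    moreover have "(\<Sum>k\<in>K3. if P k then A else if Q k then B else C) = (\<Sum>k\<in>K3. C)"
      by (rule sum.cong) (auto simp: K3_def)
    ultimately show ?thesis by simp
  qed
  also have "\<dots> = A * of_nat (card K1) + (B * of_nat (card K2) + C * of_nat (card K3))"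
    by (simp add: mult.commute)
  finally show ?thesis unfolding K1_def[symmetric] K2_def[symmetric] cK
    by (simp add: algebra_simps)
qed

lemma cardK_oo: "card {k\<in>Kset p. Poo (pr p k)} = drop_oo p"
proof -
  have "{k\<in>Kset p. Poo (pr p k)} = {k\<in>{1..length p}. Poo (pr p k)}"
    by (auto simp: Kset_def Poo_def split: prod.splits)
  then show ?thesis using card_pr[of p Poo] by (simp only: drop_oo_cp)
qed

lemma cardK_eo: "card {k\<in>Kset p. Peo (pr p k)} = drop_eo p"
proof -
  have "{k\<in>Kset p. Peo (pr p k)} = {k\<in>{1..length p}. Peo (pr p k)}"
    by (auto simp: Kset_def Peo_def split: prod.splits)
  then show ?thesis using card_pr[of p Peo] by (simp only: drop_eo_cp)
qed

lemma ins_counts: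
  assumes p: "p \<in> cycles_o (m-1)" and m: "m \<ge> 2" and k: "k \<in> Kset p"
  shows "drop_oo (ins p k m) + (if Poo (pr p k) then 1 else 0) = drop_oo p + (if odd m then 1 else 0)"
    "drop_eo (ins p k m) + (if Peo (pr p k) then 1 else 0) = drop_eo p + (if even m then 1 else 0)"
    "\<not> (Poo (pr p k) \<and> Peo (pr p k))"
proof -
  have pne: "p \<noteq> []" and sp: "set p = {1..m-1}"
    using p m unfolding cycles_o_def cycles_def by auto
  have kk: "k \<in> {1..length p}" and ob: "odd (snd (pr p k))" using k by (auto simp: Kset_def)
  have a: "fst (pr p k) < m" and b: "snd (pr p k) < m" using pr_mem[OF pne kk] sp m by auto
  show "drop_oo (ins p k m) + (if Poo (pr p k) then 1 else 0) = drop_oo p + (if odd m then 1 else 0)"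
    using ins_count[OF pne kk, of Poo m] a b ob by (simp add: drop_oo_cp Poo_def)
  show "drop_eo (ins p k m) + (if Peo (pr p k) then 1 else 0) = drop_eo p + (if even m then 1 else 0)"
    using ins_count[OF pne kk, of Peo m] a b ob by (simp add: drop_eo_cp Peo_def)
  show "\<not> (Poo (pr p k) \<and> Peo (pr p k))" by (auto simp: Poo_def Peo_def split: prod.splits)
qed

lemma local_even:
  fixes x y :: "'a::field"
  assumes p: "p \<in> cycles_o (m-1)" and m: "m \<ge> 2" "even m" and k: "k \<in> Kset p"
    and x: "x \<noteq> 0" and y: "y \<noteq> 0"
  shows "x ^ drop_oo (ins p k m) * y ^ drop_eo (ins p k m) = x ^ drop_oo p * y ^ drop_eo p *
    (if Poo (pr p k) then inverse x * y else if Peo (pr p k) then 1 else y)"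
proof -
  note c = ins_counts[OF p m(1) k]
  show ?thesis
  proof (cases "Poo (pr p k)")
    case True
    then have "drop_oo p = Suc (drop_oo (ins p k m))" "drop_eo (ins p k m) = Suc (drop_eo p)"
      using c m by auto
    then show ?thesis using True x by (simp add: field_simps)
  next
    case False
    then show ?thesis
    proof (cases "Peo (pr p k)")
      case True
      then have "drop_oo p = drop_oo (ins p k m)" "drop_eo (ins p k m) = drop_eo p"
        using c m False by auto
      then show ?thesis using True False by simp
    next
      case F2: False
      then have "drop_oo p = drop_oo (ins p k m)" "drop_eo (ins p k m) = Suc (drop_eo p)"
        using c m False by auto
      then show ?thesis using F2 False by (simp add: field_simps)
    qed
  qed
qed

lemma local_odd:
  fixes x y :: "'a::field"
  assumes p: "p \<in> cycles_o (m-1)" and m: "m \<ge> 2" "odd m" and k: "k \<in> Kset p"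
    and x: "x \<noteq> 0" and y: "y \<noteq> 0"
  shows "x ^ drop_oo (ins p k m) * y ^ drop_eo (ins p k m) = x ^ drop_oo p * y ^ drop_eo p *
    (if Poo (pr p k) then 1 else if Peo (pr p k) then x * inverse y else x)"
proof -
  note c = ins_counts[OF p m(1) k]
  show ?thesis
  proof (cases "Poo (pr p k)")
    case True
    then have "drop_oo p = drop_oo (ins p k m)" "drop_eo (ins p k m) = drop_eo p"
      using c m by auto
    then show ?thesis using True by simp
  next
    case False
    then show ?thesis
    proof (cases "Peo (pr p k)")
      case True
      then have "drop_oo (ins p k m) = Suc (drop_oo p)" "drop_eo p = Suc (drop_eo (ins p k m))"
        using c m False by auto
      then show ?thesis using True False y by (simp add: field_simps)
    next
      case F2: False
      then have "drop_oo (ins p k m) = Suc (drop_oo p)" "drop_eo (ins p k m) = drop_eo p"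
        using c m False by auto
      then show ?thesis using F2 False by (simp add: field_simps)
    qed
  qed
qed

lemma inner_even:
  fixes x y :: "'a::field"
  assumes n: "n \<ge> 1" and p: "p \<in> cycles_o (2*n-1)" and x: "x \<noteq> 0" and y: "y \<noteq> 0"
  shows "(\<Sum>k\<in>Kset p. x ^ drop_oo (ins p k (2*n)) * y ^ drop_eo (ins p k (2*n))) =
    x ^ drop_oo p * y ^ drop_eo p *
              (of_nat (drop_oo p) * inverse x * y + of_nat (drop_eo p)
               + (of_nat n - of_nat (drop_oo p) - of_nat (drop_eo p)) * y)"
proof -
  have m: "2*n \<ge> 2" "even (2*n)" using n by auto
  have p': "p \<in> cycles_o (2*n-1)" using p by simp
  have fk: "finite (Kset p)" by (simp add: Kset_def)
  have dj: "\<And>k. k \<in> Kset p \<Longrightarrow> \<not> (Poo (pr p k) \<and> Peo (pr p k))"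
    by (auto simp: Poo_def Peo_def split: prod.splits)
  have cK: "card (Kset p) = n"
    using card_K[of p "2*n-1"] p odd_count2[OF n] unfolding cycles_o_def by auto
  have "(\<Sum>k\<in>Kset p. x ^ drop_oo (ins p k (2*n)) * y ^ drop_eo (ins p k (2*n))) =
    (\<Sum>k\<in>Kset p. x ^ drop_oo p * y ^ drop_eo p *
      (if Poo (pr p k) then inverse x * y else if Peo (pr p k) then 1 else y))"
    by (rule sum.cong[OF refl]) (rule local_even[OF _ m], use p x y in auto)
  also have "\<dots> = x ^ drop_oo p * y ^ drop_eo p *
      (\<Sum>k\<in>Kset p. if Poo (pr p k) then inverse x * y else if Peo (pr p k) then 1 else y)"
    by (simp add: sum_distrib_left)
  also have "(\<Sum>k\<in>Kset p. if Poo (pr p k) then inverse x * y else if Peo (pr p k) then 1 else y)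
     = inverse x * y * of_nat (drop_oo p) + 1 * of_nat (drop_eo p)
       + y * (of_nat n - of_nat (drop_oo p) - of_nat (drop_eo p))"
    using sum_if3[where P="\<lambda>k. Poo (pr p k)" and Q="\<lambda>k. Peo (pr p k)" and A="inverse x * y" and B=1 and C=y, OF fk dj] by (simp add: cardK_oo cardK_eo cK)
  finally show ?thesis by (simp add: algebra_simps)
qed

lemma inner_odd:
  fixes x y :: "'a::field"
  assumes n: "n \<ge> 1" and p: "p \<in> cycles_o (2*n)" and x: "x \<noteq> 0" and y: "y \<noteq> 0"
  shows "(\<Sum>k\<in>Kset p. x ^ drop_oo (ins p k (2*n+1)) * y ^ drop_eo (ins p k (2*n+1))) =
    x ^ drop_oo p * y ^ drop_eo p *
              (of_nat (drop_oo p) + of_nat (drop_eo p) * x * inverse y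
               + (of_nat n - of_nat (drop_oo p) - of_nat (drop_eo p)) * x)"
proof -
  have m: "2*n+1 \<ge> 2" "odd (2*n+1)" using n by auto
  have p': "p \<in> cycles_o (2*n+1-1)" using p by simp
  have fk: "finite (Kset p)" by (simp add: Kset_def)
  have dj: "\<And>k. k \<in> Kset p \<Longrightarrow> \<not> (Poo (pr p k) \<and> Peo (pr p k))"
    by (auto simp: Poo_def Peo_def split: prod.splits)
  have cK: "card (Kset p) = n"
    using card_K[of p "2*n"] p odd_count1[of n] unfolding cycles_o_def by auto
  have "(\<Sum>k\<in>Kset p. x ^ drop_oo (ins p k (2*n+1)) * y ^ drop_eo (ins p k (2*n+1))) =
    (\<Sum>k\<in>Kset p. x ^ drop_oo p * y ^ drop_eo p *
      (if Poo (pr p k) then 1 else if Peo (pr p k) then x * inverse y else x))"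
    by (rule sum.cong[OF refl]) (rule local_odd[OF _ m], use p' x y in auto)
  also have "\<dots> = x ^ drop_oo p * y ^ drop_eo p *
      (\<Sum>k\<in>Kset p. if Poo (pr p k) then 1 else if Peo (pr p k) then x * inverse y else x)"
    by (simp add: sum_distrib_left)
  also have "(\<Sum>k\<in>Kset p. if Poo (pr p k) then 1 else if Peo (pr p k) then x * inverse y else x)
     = 1 * of_nat (drop_oo p) + x * inverse y * of_nat (drop_eo p)
       + x * (of_nat n - of_nat (drop_oo p) - of_nat (drop_eo p))"
    using sum_if3[where P="\<lambda>k. Poo (pr p k)" and Q="\<lambda>k. Peo (pr p k)" and A=1 and B="x * inverse y" and C=x, OF fk dj] by (simp add: cardK_oo cardK_eo cK)
  finally show ?thesis by (simp add: algebra_simps)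
qed

theorem lemma2p1:
  fixes x y :: "'a :: field" and n :: nat
  assumes "n \<ge> 1" and "x \<noteq> 0" and "y \<noteq> 0"
  shows "(\<Sum>p\<in>cycles_o (2*n). x ^ drop_oo p * y ^ drop_eo p) =
           (\<Sum>p\<in>cycles_o (2*n-1). x ^ drop_oo p * y ^ drop_eo p *
              (of_nat (drop_oo p) * inverse x * y + of_nat (drop_eo p)
               + (of_nat n - of_nat (drop_oo p) - of_nat (drop_eo p)) * y))
       \<and> (\<Sum>p\<in>cycles_o (2*n+1). x ^ drop_oo p * y ^ drop_eo p) =
           (\<Sum>p\<in>cycles_o (2*n). x ^ drop_oo p * y ^ drop_eo p *
              (of_nat (drop_oo p) + of_nat (drop_eo p) * x * inverse y
               + (of_nat n - of_nat (drop_oo p) - of_nat (drop_eo p)) * x))"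
proof
  have m1: "2*n \<ge> 2" using assms by auto
  show "(\<Sum>p\<in>cycles_o (2*n). x ^ drop_oo p * y ^ drop_eo p) =
           (\<Sum>p\<in>cycles_o (2*n-1). x ^ drop_oo p * y ^ drop_eo p *
              (of_nat (drop_oo p) * inverse x * y + of_nat (drop_eo p)
               + (of_nat n - of_nat (drop_oo p) - of_nat (drop_eo p)) * y))"
    unfolding sum_step[OF m1]
    by (rule sum.cong[OF refl]) (rule inner_even, use assms in auto)
  have m2: "2*n+1 \<ge> 2" using assms by auto
  show "(\<Sum>p\<in>cycles_o (2*n+1). x ^ drop_oo p * y ^ drop_eo p) =
           (\<Sum>p\<in>cycles_o (2*n). x ^ drop_oo p * y ^ drop_eo p *
              (of_nat (drop_oo p) + of_nat (drop_eo p) * x * inverse y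
               + (of_nat n - of_nat (drop_oo p) - of_nat (drop_eo p)) * x))"
    unfolding sum_step[OF m2]
    by (simp only: add_diff_cancel_right') (rule sum.cong[OF refl], rule inner_odd, use assms in auto)
qed

end
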